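(* Let $K\subset M$ be closed subsets of $\mathbb{R}^2$. Then the following conditions are equivalent: (i) $M=K\cup C$, where $C$ is the union of a system of components of $\mathbb{R}^2\setminus K$; (ii) $\partial M\subset\partial K$. Moreover, if these conditions hold and $K\in\mathcal{D}_2$, then $M\in\mathcal{D}_2$.
   Context: A function on an open convex set $C\subset\mathbb{R}^d$ is DC if it is the difference of two convex functions on $C$. $\mathcal{D}_2$ denotes the family consisting of $\varnothing$ together with all nonempty closed sets $A\subset\mathbb{R}^2$ whose distance function $d_A=\operatorname{dist}(\cdot,A)$ is DC on $\mathbb{R}^2$. *)

theory Defs
  imports "HOL-Analysis.Analysis"
begin

definition DC_on :: "'a::real_vector set \<Rightarrow> ('a \<Rightarrow> real) \<Rightarrow> bool" where
  "DC_on C f \<longleftrightarrow> (\<exists>g h. convex_on C g \<and> convex_on C h \<and> (\<forall>x\<in>C. f x = g x - h x))"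

definition D2 :: "(real^2) set set" where
  "D2 = {{}} \<union> {A. A \<noteq> {} \<and> closed A \<and> DC_on UNIV (\<lambda>x. infdist x A)}"

end

theory Submission
  imports Defs
begin

lemma glue_aux:
  fixes g h :: "'a::real_normed_vector \<Rightarrow> real"
  assumes g: "convex_on UNIV g" and h: "convex_on UNIV h"
    and hg: "\<And>x. h x \<le> g x" and U: "open U"
    and fr: "\<And>x. x \<in> frontier U \<Longrightarrow> g x = h x"
    and t: "0 \<le> t" "t \<le> 1" and nt: "(1 - t) *\<^sub>R a + t *\<^sub>R b \<notin> U"
  defines "psi \<equiv> (\<lambda>x. if x \<in> U then h x else g x)"
  shows "\<exists>s. 0 \<le> s \<and> s \<le> t \<and> (1 - s) *\<^sub>R a + s *\<^sub>R b \<notin> U \<and>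
           psi ((1 - s) *\<^sub>R a + s *\<^sub>R b) \<le> (1 - s) * psi a + s * psi b"
proof (cases "a \<in> U")
  case False
  then show ?thesis by (intro exI[of _ 0]) (auto simp: t)
next
  case True
  let ?z = "(1 - t) *\<^sub>R a + t *\<^sub>R b"
  have "closed_segment a ?z \<inter> frontier U \<noteq> {}"
    by (rule connected_Int_frontier) (use True nt in auto)
  then obtain p where p: "p \<in> closed_segment a ?z" "p \<in> frontier U" by blast
  then obtain u where u: "0 \<le> u" "u \<le> 1" "p = (1 - u) *\<^sub>R a + u *\<^sub>R ?z"
    unfolding closed_segment_def by blast
  have pe: "p = (1 - u*t) *\<^sub>R a + (u*t) *\<^sub>R b" using u(3)
    by (simp add: algebra_simps scaleR_add_right)
  have pU: "p \<notin> U" using p(2) U by (simp add: frontier_def interior_open)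
  have ut1: "0 \<le> u*t" "u*t \<le> t" using u t by (auto simp: mult_left_le_one_le)
  have ut: "0 \<le> u*t" "u*t \<le> t" "u * t \<le> 1" using ut1 t by auto
  have "psi p = h p" using pU fr[OF p(2)] by (simp add: psi_def)
  also have "\<dots> \<le> (1 - u*t) * h a + (u*t) * h b"
    unfolding pe by (rule convex_onD[OF h]) (use ut in auto)
  also have "\<dots> \<le> (1 - u*t) * psi a + (u*t) * psi b"
    using ut hg by (intro add_mono mult_left_mono) (auto simp: psi_def)
  finally show ?thesis using pU ut pe by (intro exI[of _ "u*t"]) auto
qed

lemma glue_convex:
  fixes g h :: "'a::real_normed_vector \<Rightarrow> real"
  assumes g: "convex_on UNIV g" and h: "convex_on UNIV h"
    and hg: "\<And>x. h x \<le> g x" and U: "open U"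
    and fr: "\<And>x. x \<in> frontier U \<Longrightarrow> g x = h x"
  shows "convex_on UNIV (\<lambda>x. if x \<in> U then h x else g x)"
proof (rule convex_onI)
  fix t :: real and a b :: 'a
  assume t: "0 < t" "t < 1"
  define psi where "psi = (\<lambda>x. if x \<in> U then h x else g x)"
  have hpsi: "h x \<le> psi x" for x using hg by (simp add: psi_def)
  let ?z = "(1 - t) *\<^sub>R a + t *\<^sub>R b"
  show "psi ?z \<le> (1 - t) * psi a + t * psi b"
  proof (cases "?z \<in> U")
    case True
    have "psi ?z = h ?z" using True by (simp add: psi_def)
    also have "\<dots> \<le> (1 - t) * h a + t * h b"
      by (rule convex_onD[OF h]) (use t in auto)
    also have "\<dots> \<le> (1 - t) * psi a + t * psi b"
      using t hpsi by (intro add_mono mult_left_mono) auto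
    finally show ?thesis .
  next
    case False
    obtain s where s: "0 \<le> s" "s \<le> t" "(1 - s) *\<^sub>R a + s *\<^sub>R b \<notin> U"
      "psi ((1 - s) *\<^sub>R a + s *\<^sub>R b) \<le> (1 - s) * psi a + s * psi b"
      using glue_aux[OF g h hg U fr, of t a b] t False unfolding psi_def by auto
    have "?z = (1 - (1 - t)) *\<^sub>R b + (1 - t) *\<^sub>R a" by simp
    then obtain s0 where s0: "0 \<le> s0" "s0 \<le> 1 - t" "(1 - s0) *\<^sub>R b + s0 *\<^sub>R a \<notin> U"
      "psi ((1 - s0) *\<^sub>R b + s0 *\<^sub>R a) \<le> (1 - s0) * psi b + s0 * psi a"
      using glue_aux[OF g h hg U fr, of "1 - t" b a] t False unfolding psi_def
      by (auto simp: add.commute)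
    define s' where "s' = 1 - s0"
    have s': "t \<le> s'" "s' \<le> 1" "(1 - s') *\<^sub>R a + s' *\<^sub>R b \<notin> U"
      "psi ((1 - s') *\<^sub>R a + s' *\<^sub>R b) \<le> (1 - s') * psi a + s' * psi b"
      using s0 by (auto simp: s'_def add.commute algebra_simps)
    define xs where "xs = (1 - s) *\<^sub>R a + s *\<^sub>R b"
    define xs' where "xs' = (1 - s') *\<^sub>R a + s' *\<^sub>R b"
    have gs: "g xs \<le> (1 - s) * psi a + s * psi b" using s(3,4) by (simp add: psi_def xs_def)
    have gs': "g xs' \<le> (1 - s') * psi a + s' * psi b" using s'(3,4) by (simp add: psi_def xs'_def)
    have pz: "psi ?z = g ?z" using False by (simp add: psi_def)
    show ?thesis
    proof (cases "s = s'")
      case True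
      then have "s = t" using s s' by auto
      then show ?thesis using pz gs by (simp add: xs_def)
    next
      case False
      then have lt: "s < s'" using s s' by auto
      define l where "l = (t - s) / (s' - s)"
      have l: "0 \<le> l" "l \<le> 1" using lt s s' by (auto simp: l_def field_simps)
      have "l * (s' - s) = t - s" using lt by (simp add: l_def)
      then have tl: "t = (1 - l) * s + l * s'" by (simp add: algebra_simps)
      have ze: "?z = (1 - l) *\<^sub>R xs + l *\<^sub>R xs'"
        unfolding xs_def xs'_def tl by (simp add: algebra_simps)
      have "g ?z \<le> (1 - l) * g xs + l * g xs'"
        unfolding ze by (rule convex_onD[OF g]) (use l in auto)
      also have "\<dots> \<le> (1 - l) * ((1 - s) * psi a + s * psi b) + l * ((1 - s') * psi a + s' * psi b)"
        using l gs gs' by (intro add_mono mult_left_mono) auto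
      also have "\<dots> = (1 - t) * psi a + t * psi b" unfolding tl by (simp add: algebra_simps)
      finally show ?thesis using pz by simp
    qed
  qed
qed auto


theorem lemma4p14:
  fixes K M :: "(real^2) set"
  assumes "closed K" and "closed M" and "K \<subseteq> M"
  shows "((\<exists>S. S \<subseteq> components (- K) \<and> M = K \<union> \<Union>S) \<longleftrightarrow> frontier M \<subseteq> frontier K)
         \<and> ((\<exists>S. S \<subseteq> components (- K) \<and> M = K \<union> \<Union>S) \<and> frontier M \<subseteq> frontier K
              \<and> K \<in> D2 \<longrightarrow> M \<in> D2)"
proof -
  note cK = assms(1) and cM = assms(2) and KM = assms(3)
  have P1: "frontier M \<subseteq> frontier K" if S: "S \<subseteq> components (- K)" "M = K \<union> \<Union>S" for S
  proof
    fix x assume x: "x \<in> frontier M"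
    have xM: "x \<in> M" using x cM frontier_subset_closed by blast
    have xi: "x \<notin> interior M" using x by (simp add: frontier_def)
    have xK: "x \<in> K"
    proof (rule ccontr)
      assume "x \<notin> K"
      then obtain C where C: "C \<in> S" "x \<in> C" using xM S by auto
      have "open C" using C S open_components[of "- K"] cK by (auto simp: open_Compl)
      moreover have "C \<subseteq> M" using C S by auto
      ultimately have "x \<in> interior M" using C interior_maximal by blast
      with xi show False by simp
    qed
    have "interior K \<subseteq> interior M" using KM by (rule interior_mono)
    then show "x \<in> frontier K" using xK xi closure_subset[of K] by (auto simp: frontier_def)
  qed
  have P2: "\<exists>S. S \<subseteq> components (- K) \<and> M = K \<union> \<Union>S" if F: "frontier M \<subseteq> frontier K"
  proof (intro exI conjI)
    let ?S = "{C \<in> components (- K). C \<inter> M \<noteq> {}}"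
    show "?S \<subseteq> components (- K)" by auto
    show "M = K \<union> \<Union>?S"
    proof
      show "M \<subseteq> K \<union> \<Union>?S"
      proof
        fix x assume "x \<in> M"
        show "x \<in> K \<union> \<Union>?S"
        proof (cases "x \<in> K")
          case False
          then have "x \<in> \<Union>(components (- K))" by simp
          then obtain C where "C \<in> components (- K)" "x \<in> C" by blast
          then show ?thesis using \<open>x \<in> M\<close> by blast
        qed simp
      qed
    next
      have "C \<subseteq> M" if C: "C \<in> components (- K)" "C \<inter> M \<noteq> {}" for C
      proof (rule ccontr)
        assume "\<not> C \<subseteq> M"
        then have "C \<inter> frontier M \<noteq> {}"
          using connected_Int_frontier[OF in_components_connected[OF C(1)] C(2)] by blast
        then obtain y where "y \<in> C" "y \<in> frontier M" by blast
        then have "y \<in> K" using F frontier_subset_closed[OF cK] by blast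
        moreover have "y \<in> - K" using \<open>y \<in> C\<close> in_components_subset[OF C(1)] by blast
        ultimately show False by simp
      qed
      then show "K \<union> \<Union>?S \<subseteq> M" using KM by blast
    qed
  qed
  have P3: "M \<in> D2" if F: "frontier M \<subseteq> frontier K" and KD: "K \<in> D2"
  proof (cases "M = {}")
    case True then show ?thesis by (simp add: D2_def)
  next
    case Mne: False
    show ?thesis
    proof (cases "K = {}")
      case True
      then have "frontier M = {}" using F by simp
      then have "M = UNIV" using Mne frontier_eq_empty by blast
      then have "DC_on UNIV (\<lambda>x. infdist x M)"
        unfolding DC_on_def by (intro exI[of _ "\<lambda>x. 0"]) (auto simp: convex_on_const)
      then show ?thesis using Mne cM by (simp add: D2_def)
    next
      case Kne: False
      then have "DC_on UNIV (\<lambda>x. infdist x K)" using KD by (simp add: D2_def)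
      then obtain g h where g: "convex_on UNIV g" and h: "convex_on UNIV h"
        and gh: "\<And>x. infdist x K = g x - h x" unfolding DC_on_def by auto
      define U where "U = M - K"
      have "M - K \<subseteq> interior M"
        using F frontier_subset_closed[OF cK] cM by (auto simp: frontier_def closure_closed)
      then have "U = interior M \<inter> - K" using interior_subset[of M] by (auto simp: U_def)
      then have oU: "open U" using cK by (auto simp: open_Compl)
      have clU: "closure U \<subseteq> M" unfolding U_def using cM by (meson Diff_subset closure_minimal)
      have frU: "frontier U \<subseteq> K" using clU oU by (auto simp: frontier_def interior_open U_def)
      have hg: "h x \<le> g x" for x using gh[of x] infdist_nonneg[of x K] by simp
      have fr: "g x = h x" if "x \<in> frontier U" for x
        using gh[of x] frU that by auto
      have conv: "convex_on UNIV (\<lambda>x. if x \<in> U then h x else g x)"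
        by (rule glue_convex[OF g h hg oU fr])
      have out: "infdist x M = infdist x K" if xM: "x \<notin> M" for x
      proof (rule antisym)
        show "infdist x M \<le> infdist x K" using KM Kne by (rule infdist_mono)
        have "infdist x K \<le> dist x y" if y: "y \<in> M" for y
        proof -
          have "closed_segment x y \<inter> frontier M \<noteq> {}"
            by (rule connected_Int_frontier) (use xM y in auto)
          then obtain w where w: "w \<in> closed_segment x y" "w \<in> frontier M" by blast
          then have "w \<in> K" using F frontier_subset_closed[OF cK] by blast
          then have "infdist x K \<le> dist x w" by (rule infdist_le)
          also have "\<dots> \<le> dist x y" using dist_in_closed_segment[OF w(1)] by (simp add: dist_commute)
          finally show ?thesis .
        qed
        then show "infdist x K \<le> infdist x M"
          unfolding infdist_notempty[OF Mne] using Mne by (intro cINF_greatest) auto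
      qed
      have eq: "infdist x M = (if x \<in> U then h x else g x) - h x" for x
      proof (cases "x \<in> M")
        case True
        then show ?thesis using gh[of x] by (auto simp: U_def)
      next
        case False
        then show ?thesis using out[OF False] gh[of x] by (auto simp: U_def)
      qed
      have "DC_on UNIV (\<lambda>x. infdist x M)"
        unfolding DC_on_def using conv h eq by blast
      then show ?thesis using Mne cM by (simp add: D2_def)
    qed
  qed
  show ?thesis using P1 P2 P3 by blast
qed

end
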